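(* Let $k\in\{1,\dots,d\}$ and $p\ge 1$. Then the function $R:\mathbb{P}_d\to\mathbb{R}$ defined by $R(X)=\left|\sum_{j=1}^k\lambda_j^{\downarrow}(X)\right|^p$ is geodesically convex on $\mathbb{P}_d$.
   Context: $\mathbb{P}_d$ denotes the set of real symmetric $d\times d$ positive definite matrices, equipped with the affine-invariant Riemannian metric $\langle U,V\rangle_X=\operatorname{tr}(X^{-1}UX^{-1}V)$, whose geodesic from $A$ to $B$ is $\gamma(t)=A^{1/2}(A^{-1/2}BA^{-1/2})^tA^{1/2}$, $t\in[0,1]$. A function $f$ on $\mathbb{P}_d$ is geodesically convex if $t\mapsto f(\gamma(t))$ is convex on $[0,1]$ for every such geodesic. $\lambda_1^{\downarrow}(X)\ge\dots\ge\lambda_d^{\downarrow}(X)$ denote the eigenvalues of $X$ in decreasing order. *)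

theory Defs
  imports "Jordan_Normal_Form.Char_Poly" "HOL-Analysis.Convex"
begin

definition pd_mat :: "nat \<Rightarrow> real mat \<Rightarrow> bool" where
  "pd_mat d A \<longleftrightarrow> A \<in> carrier_mat d d \<and> transpose_mat A = A \<and>
     (\<forall>x \<in> carrier_vec d. x \<noteq> 0\<^sub>v d \<longrightarrow> x \<bullet> (A *\<^sub>v x) > 0)"

definition mat_powr :: "real mat \<Rightarrow> real \<Rightarrow> real mat" where
  "mat_powr M t = (let n = dim_row M in
     SOME P. \<exists>Q l. Q \<in> carrier_mat n n \<and> transpose_mat Q * Q = 1\<^sub>m n \<and>
        M = Q * mat_diag n l * transpose_mat Q \<and>
        P = Q * mat_diag n (\<lambda>i. l i powr t) * transpose_mat Q)"

definition geod :: "real mat \<Rightarrow> real mat \<Rightarrow> real \<Rightarrow> real mat" where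
  "geod A B t = mat_powr A (1/2) *
     mat_powr (mat_powr A (-1/2) * B * mat_powr A (-1/2)) t * mat_powr A (1/2)"

definition geod_convex :: "nat \<Rightarrow> (real mat \<Rightarrow> real) \<Rightarrow> bool" where
  "geod_convex d f \<longleftrightarrow>
     (\<forall>A B. pd_mat d A \<longrightarrow> pd_mat d B \<longrightarrow> convex_on {0..1} (\<lambda>t. f (geod A B t)))"

text \<open>Eigenvalues (with algebraic multiplicity) in decreasing order; for real symmetric
  matrices the characteristic polynomial splits over the reals.\<close>
definition eigvals_desc :: "real mat \<Rightarrow> real list" where
  "eigvals_desc X = (THE xs. sorted_wrt (\<ge>) xs \<and> char_poly X = (\<Prod>a\<leftarrow>xs. [:- a, 1:]))"

definition eig_dec :: "real mat \<Rightarrow> nat \<Rightarrow> real" where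
  "eig_dec X j = eigvals_desc X ! (j - 1)"

end

theory Submission
  imports Defs "Jordan_Normal_Form.Schur_Decomposition" "HOL-Combinatorics.Permutations"
begin

definition orth :: "nat \<Rightarrow> real mat \<Rightarrow> bool" where
  "orth n Q \<longleftrightarrow> Q \<in> carrier_mat n n \<and> transpose_mat Q * Q = 1\<^sub>m n"

lemma orth_right: assumes "orth n Q" shows "Q * transpose_mat Q = 1\<^sub>m n"
  using assms mat_mult_left_right_inverse[of "transpose_mat Q" n Q] unfolding orth_def by auto

lemma orth_carrier: "orth n Q \<Longrightarrow> Q \<in> carrier_mat n n" unfolding orth_def by auto

lemma sdiag_entry:
  assumes Q: "Q \<in> carrier_mat n n" and i: "i < n" and j: "j < n"
  shows "(Q * mat_diag n l * transpose_mat Q) $$ (i,j) = (\<Sum>k=0..<n. Q $$ (i,k) * l k * Q $$ (j,k))"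
proof -
  have "Q * mat_diag n l = mat n n (\<lambda>(i,j). Q $$ (i,j) * l j)"
    using mat_diag_mult_right[OF Q] .
  then show ?thesis using Q i j by (simp add: scalar_prod_def)
qed

lemma mat_diag_dims[simp]: "dim_row (mat_diag n f) = n" "dim_col (mat_diag n f) = n"
  unfolding mat_diag_def by auto

lemma mult_cn: "A \<in> carrier_mat n n \<Longrightarrow> B \<in> carrier_mat n n \<Longrightarrow> A * B \<in> carrier_mat n n"
  by auto


lemma sdiag_carrier: "Q \<in> carrier_mat n n \<Longrightarrow> Q * mat_diag n l * transpose_mat Q \<in> carrier_mat n n"
  by auto

lemma sdiag_sym: fixes Q :: "real mat" assumes Q: "Q \<in> carrier_mat n n"
  shows "transpose_mat (Q * mat_diag n l * transpose_mat Q) = Q * mat_diag n l * transpose_mat Q"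
proof (rule eq_matI)
  fix i j assume "i < dim_row (Q * mat_diag n l * transpose_mat Q)" "j < dim_col (Q * mat_diag n l * transpose_mat Q)"
  then have ij: "i < n" "j < n" using Q by auto
  have "transpose_mat (Q * mat_diag n l * transpose_mat Q) $$ (i,j) = (Q * mat_diag n l * transpose_mat Q) $$ (j,i)"
    using ij Q by simp
  also have "\<dots> = (Q * mat_diag n l * transpose_mat Q) $$ (i,j)"
    unfolding sdiag_entry[OF Q ij] sdiag_entry[OF Q ij(2) ij(1)] by (rule sum.cong[OF refl]) (simp add: ac_simps)
  finally show "transpose_mat (Q * mat_diag n l * transpose_mat Q) $$ (i,j) = (Q * mat_diag n l * transpose_mat Q) $$ (i,j)" .
qed (use Q in auto)

lemma sdiag_unique:
  assumes O1: "orth n Q1" and O2: "orth n Q2"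
    and eq: "Q1 * mat_diag n l1 * transpose_mat Q1 = Q2 * mat_diag n l2 * transpose_mat Q2"
  shows "Q1 * mat_diag n (\<lambda>i. f (l1 i)) * transpose_mat Q1 = Q2 * mat_diag n (\<lambda>i. f (l2 i)) * transpose_mat Q2"
proof -
  have C1: "Q1 \<in> carrier_mat n n" and C2: "Q2 \<in> carrier_mat n n" using O1 O2 orth_carrier by auto
  have T1: "transpose_mat Q1 \<in> carrier_mat n n" and T2: "transpose_mat Q2 \<in> carrier_mat n n" using C1 C2 by auto
  have I1: "transpose_mat Q1 * Q1 = 1\<^sub>m n" and I2: "transpose_mat Q2 * Q2 = 1\<^sub>m n" using O1 O2 unfolding orth_def by auto
  have J1: "Q1 * transpose_mat Q1 = 1\<^sub>m n" and J2: "Q2 * transpose_mat Q2 = 1\<^sub>m n" using O1 O2 orth_right by auto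
  define W where "W = transpose_mat Q1 * Q2"
  have W: "W \<in> carrier_mat n n" unfolding W_def using C1 C2 by auto
  have D: "\<And>g. mat_diag n g \<in> carrier_mat n n" by simp
  have "mat_diag n l1 * W = transpose_mat Q1 * (Q1 * mat_diag n l1 * transpose_mat Q1) * Q2"
  proof -
    have "transpose_mat Q1 * (Q1 * mat_diag n l1 * transpose_mat Q1) * Q2
       = (transpose_mat Q1 * Q1) * mat_diag n l1 * (transpose_mat Q1 * Q2)"
      using C1 C2 T1 D by (simp add: assoc_mult_mat[of _ n n _ n _ n] mult_cn)
    then show ?thesis using I1 W_def by simp
  qed
  also have "\<dots> = transpose_mat Q1 * (Q2 * mat_diag n l2 * transpose_mat Q2) * Q2" by (simp add: eq)
  also have "\<dots> = W * mat_diag n l2"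
  proof -
    have "transpose_mat Q1 * (Q2 * mat_diag n l2 * transpose_mat Q2) * Q2
       = (transpose_mat Q1 * Q2) * mat_diag n l2 * (transpose_mat Q2 * Q2)"
      using C1 C2 T1 T2 D by (simp add: assoc_mult_mat[of _ n n _ n _ n] mult_cn)
    then show ?thesis using I2 W_def C1 C2 by simp
  qed
  finally have comm: "mat_diag n l1 * W = W * mat_diag n l2" .
  have ent: "W $$ (i,j) = 0 \<or> l1 i = l2 j" if "i < n" "j < n" for i j
  proof -
    have "(mat_diag n l1 * W) $$ (i,j) = (W * mat_diag n l2) $$ (i,j)" using comm by simp
    then have "l1 i * W $$ (i,j) = W $$ (i,j) * l2 j"
      using that W by (simp add: mat_diag_mult_left[OF W] mat_diag_mult_right[OF W])
    then show ?thesis by (auto simp: algebra_simps)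
  qed
  have comm2: "mat_diag n (\<lambda>i. f (l1 i)) * W = W * mat_diag n (\<lambda>i. f (l2 i))"
  proof (rule eq_matI)
    fix i j assume "i < dim_row (W * mat_diag n (\<lambda>i. f (l2 i)))" "j < dim_col (W * mat_diag n (\<lambda>i. f (l2 i)))"
    then have ij: "i < n" "j < n" using W by auto
    show "(mat_diag n (\<lambda>i. f (l1 i)) * W) $$ (i, j) = (W * mat_diag n (\<lambda>i. f (l2 i))) $$ (i, j)"
      using ent[OF ij] ij W by (auto simp add: mat_diag_mult_left[OF W] mat_diag_mult_right[OF W])
  qed (use W in auto)
  have "Q1 * mat_diag n (\<lambda>i. f (l1 i)) * transpose_mat Q1 = Q1 * mat_diag n (\<lambda>i. f (l1 i)) * (W * transpose_mat Q2)"
  proof -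
    have "W * transpose_mat Q2 = transpose_mat Q1 * (Q2 * transpose_mat Q2)" unfolding W_def using T1 C2 T2 by simp
    then show ?thesis using J2 T1 by simp
  qed
  also have "\<dots> = Q1 * (mat_diag n (\<lambda>i. f (l1 i)) * W) * transpose_mat Q2"
    using C1 W T2 D by (simp add: assoc_mult_mat[of _ n n _ n _ n] mult_cn)
  also have "\<dots> = (Q1 * W) * mat_diag n (\<lambda>i. f (l2 i)) * transpose_mat Q2"
    unfolding comm2 using C1 W T2 D by (simp add: assoc_mult_mat[of _ n n _ n _ n] mult_cn)
  also have "Q1 * W = Q2" unfolding W_def using C1 T1 C2 J1
    by (simp add: assoc_mult_mat[of _ n n _ n _ n, symmetric] mult_cn)
  finally show ?thesis .
qed

lemma mat_powr_eq:
  assumes O: "orth n Q" and M: "M = Q * mat_diag n l * transpose_mat Q"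
  shows "mat_powr M t = Q * mat_diag n (\<lambda>i. l i powr t) * transpose_mat Q"
proof -
  have dM: "dim_row M = n" using M orth_carrier[OF O] by simp
  let ?P = "\<lambda>P. \<exists>Q l. Q \<in> carrier_mat n n \<and> transpose_mat Q * Q = 1\<^sub>m n \<and>
        M = Q * mat_diag n l * transpose_mat Q \<and>
        P = Q * mat_diag n (\<lambda>i. l i powr t) * transpose_mat Q"
  have ex: "\<exists>P. ?P P" using O M unfolding orth_def by blast
  have "?P (mat_powr M t)" unfolding mat_powr_def Let_def dM using someI_ex[OF ex] .
  then obtain Q' l' where O': "orth n Q'" and M': "M = Q' * mat_diag n l' * transpose_mat Q'"
    and P: "mat_powr M t = Q' * mat_diag n (\<lambda>i. l' i powr t) * transpose_mat Q'"
    unfolding orth_def by blast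
  show ?thesis unfolding P using sdiag_unique[OF O' O, of l' l "\<lambda>x. x powr t"] M M' by simp
qed


lemma sym_real_eigenvalue:
  fixes A :: "real mat"
  assumes A: "A \<in> carrier_mat n n" and S: "transpose_mat A = A" and n: "n > 0"
  shows "\<exists>e. eigenvalue A e"
proof -
  let ?A = "map_mat complex_of_real A"
  have A': "?A \<in> carrier_mat n n" using A by simp
  obtain as where cp: "char_poly ?A = (\<Prod>a\<leftarrow>as. [:- a, 1:])" and len: "length as = n"
    using char_poly_factorized[OF A'] by blast
  obtain c where cin: "c \<in> set as" using len n by (cases as) auto
  have "poly (char_poly ?A) c = 0" unfolding cp using cin
    by (simp add: poly_prod_list prod_list_zero_iff)
  then have "eigenvalue ?A c" using eigenvalue_root_char_poly[OF A'] by simp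
  then obtain v where ev: "eigenvector ?A v c" unfolding eigenvalue_def by blast
  then have v: "v \<in> carrier_vec n" and v0: "v \<noteq> 0\<^sub>v n" and Av: "?A *\<^sub>v v = c \<cdot>\<^sub>v v"
    unfolding eigenvector_def using A by auto
  have Sij: "A $$ (i,j) = A $$ (j,i)" if "i < n" "j < n" for i j
    using arg_cong[OF S, of "\<lambda>M. M $$ (i,j)"] that A by simp
  have comp: "(\<Sum>j=0..<n. complex_of_real (A $$ (i,j)) * v $ j) = c * v $ i" if i: "i < n" for i
  proof -
    have "(?A *\<^sub>v v) $ i = (c \<cdot>\<^sub>v v) $ i" using Av by simp
    then show ?thesis using i A v by (simp add: scalar_prod_def)
  qed
  define N where "N = (\<Sum>i=0..<n. cnj (v $ i) * v $ i)"
  define s where "s = (\<Sum>i=0..<n. cnj (v $ i) * (\<Sum>j=0..<n. complex_of_real (A $$ (i,j)) * v $ j))"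
  have "s = (\<Sum>i=0..<n. cnj (v $ i) * (c * v $ i))" unfolding s_def
    by (intro sum.cong refl) (simp add: comp)
  then have sN: "s = c * N" unfolding N_def
    by (simp add: sum_distrib_left ac_simps)
  have "cnj s = (\<Sum>i=0..<n. v $ i * (\<Sum>j=0..<n. complex_of_real (A $$ (i,j)) * cnj (v $ j)))"
    unfolding s_def by (simp add: cnj_sum)
  also have "\<dots> = (\<Sum>i=0..<n. \<Sum>j=0..<n. v $ i * complex_of_real (A $$ (i,j)) * cnj (v $ j))"
    by (simp add: sum_distrib_left ac_simps)
  also have "\<dots> = (\<Sum>j=0..<n. \<Sum>i=0..<n. v $ i * complex_of_real (A $$ (i,j)) * cnj (v $ j))"
    by (rule sum.swap)
  also have "\<dots> = (\<Sum>j=0..<n. \<Sum>i=0..<n. cnj (v $ j) * (complex_of_real (A $$ (j,i)) * v $ i))"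
    by (intro sum.cong refl, simp add: Sij ac_simps)
  also have "\<dots> = s" unfolding s_def by (simp add: sum_distrib_left)
  finally have cs: "cnj s = s" .
  have Nreal: "cnj N = N" unfolding N_def by (simp add: cnj_sum ac_simps)
  have N0: "N \<noteq> 0"
  proof
    assume N: "N = 0"
    have "Re N = (\<Sum>i=0..<n. (Re (v $ i))^2 + (Im (v $ i))^2)" unfolding N_def
      by (simp add: Re_sum sum.distrib power2_eq_square)
    with N have "(\<Sum>i=0..<n. (Re (v $ i))^2 + (Im (v $ i))^2) = 0" by simp
    then have "\<forall>i\<in>{0..<n}. (Re (v $ i))^2 + (Im (v $ i))^2 = 0" by (subst (asm) sum_nonneg_eq_0_iff) auto
    then have "\<forall>i\<in>{0..<n}. v $ i = 0" by (auto simp: complex_eq_iff)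
    then have "v = 0\<^sub>v n" using v by (intro eq_vecI) auto
    with v0 show False by simp
  qed
  have "cnj c * N = c * N" using cs sN Nreal by (metis complex_cnj_mult)
  then have cc: "cnj c = c" using N0 by simp
  define r where "r = Re c"
  have cr: "c = complex_of_real r" unfolding r_def using cc by (metis Reals_cnj_iff complex_is_Real_iff of_real_Re)
  have "poly (char_poly ?A) (complex_of_real r) = 0" using \<open>poly (char_poly ?A) c = 0\<close> cr by simp
  then have "poly (map_poly complex_of_real (char_poly A)) (complex_of_real r) = 0"
    using of_real_hom.char_poly_hom[OF A] by metis
  then have "complex_of_real (poly (char_poly A) r) = 0"
    by (subst of_real_hom.poly_map_poly[symmetric])
  then have "poly (char_poly A) r = 0" by simp
  then show ?thesis using eigenvalue_root_char_poly[OF A] by blast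
qed


lemma real_conjugate_vec[simp]: "conjugate (w :: real vec) = w"
  unfolding conjugate_vec_def by (intro eq_vecI) auto

lemma real_cscalar: "(v :: real vec) \<bullet>c w = v \<bullet> w"
  by simp

lemma orth_complete:
  fixes u :: "real vec"
  assumes u: "u \<in> carrier_vec n" and u0: "u \<noteq> 0\<^sub>v n"
  shows "\<exists>W a. orth n W \<and> col W 0 = a \<cdot>\<^sub>v u"
proof -
  interpret cof_vec_space n "TYPE(real)" .
  define b where "b = basis_completion u"
  from basis_completion[OF u u0, folded b_def]
  have b: "set b \<subseteq> carrier_vec n" and dist_b: "distinct b" 
    and indep: "\<not> lin_dep (set b)" and hdb: "hd b = u" and len_b: "length b = n" by auto
  have n: "n > 0" using u u0 by (cases n) auto
  from hdb len_b n obtain vs where bv: "b = u # vs" by (cases b, auto)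
  define ws where "ws = gram_schmidt n b"
  from gram_schmidt_result[OF b dist_b indep refl, folded ws_def]
  have ws: "set ws \<subseteq> carrier_vec n" "corthogonal ws" "length ws = n" 
    by (auto simp: len_b)
  from gram_schmidt_hd[OF u, of vs, folded bv] have hdws: "hd ws = u" unfolding ws_def .
  define ws' where "ws' = map (\<lambda>w. (1 / sqrt (w \<bullet> w)) \<cdot>\<^sub>v w) ws"
  define W where "W = mat_of_cols n ws'"
  have wsc: "ws ! i \<in> carrier_vec n" if "i < n" for i using ws that by auto
  have ws'c: "ws' ! i \<in> carrier_vec n" if "i < n" for i using wsc[OF that] that ws unfolding ws'_def by auto
  have W: "W \<in> carrier_mat n n" unfolding W_def by (rule carrier_matI) (auto simp: ws'_def ws(3))
  have colW: "col W i = ws' ! i" if "i < n" for i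
    unfolding W_def using ws'c[OF that] that ws by (simp add: ws'_def)
  have orthws: "ws ! i \<bullet> ws ! j = 0 \<longleftrightarrow> i \<noteq> j" if "i < n" "j < n" for i j
    using corthogonalD[OF ws(2), of i j] that ws(3) by simp
  have pos: "ws ! i \<bullet> ws ! i > 0" if "i < n" for i
  proof -
    have "ws ! i \<bullet> ws ! i \<ge> 0" unfolding scalar_prod_def by (auto intro: sum_nonneg)
    moreover have "ws ! i \<bullet> ws ! i \<noteq> 0" using orthws[OF that that] by simp
    ultimately show ?thesis by simp
  qed
  have "transpose_mat W * W = 1\<^sub>m n"
  proof (rule eq_matI)
    fix i j assume "i < dim_row (1\<^sub>m n)" "j < dim_col (1\<^sub>m n)"
    then have ij: "i < n" "j < n" by auto
    have "(transpose_mat W * W) $$ (i,j) = ws' ! i \<bullet> ws' ! j" using ij W colW by simp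
    also have "\<dots> = (1 / sqrt (ws ! i \<bullet> ws ! i)) * (1 / sqrt (ws ! j \<bullet> ws ! j)) * (ws ! i \<bullet> ws ! j)"
      unfolding ws'_def using ij ws wsc[OF ij(1)] wsc[OF ij(2)] by simp
    also have "\<dots> = 1\<^sub>m n $$ (i,j)"
    proof (cases "i = j")
      case True
      have "sqrt (ws ! i \<bullet> ws ! i) * sqrt (ws ! i \<bullet> ws ! i) = ws ! i \<bullet> ws ! i"
        using pos[OF ij(1)] by simp
      then show ?thesis using True ij pos[OF ij(1)] by (simp add: field_simps)
    next
      case False
      then show ?thesis using ij orthws[OF ij] by simp
    qed
    finally show "(transpose_mat W * W) $$ (i,j) = 1\<^sub>m n $$ (i,j)" .
  qed (use W in auto)
  then have "orth n W" using W unfolding orth_def by simp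
  moreover have "col W 0 = (1 / sqrt (u \<bullet> u)) \<cdot>\<^sub>v u"
    using colW[OF n] hdws n ws(3) unfolding ws'_def by (cases ws) auto
  ultimately show ?thesis by blast
qed


lemma sum_split0: "(\<Sum>k=0..<Suc m. f k) = f 0 + (\<Sum>k=0..<m. f (Suc k))"
  by (induct m) (auto simp: add.assoc)

lemma tr3:
  fixes A :: "'a :: comm_semiring_0 mat"
  assumes "X \<in> carrier_mat n n" "A \<in> carrier_mat n n" "Y \<in> carrier_mat n n"
  shows "transpose_mat (X * A * Y) = transpose_mat Y * transpose_mat A * transpose_mat X"
proof -
  have "transpose_mat (X * A * Y) = transpose_mat Y * transpose_mat (X * A)"
    by (rule transpose_mult[of _ n n _ n], insert assms, auto)
  also have "transpose_mat (X * A) = transpose_mat A * transpose_mat X"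
    by (rule transpose_mult[of _ n n _ n], insert assms, auto)
  finally show ?thesis using assms by (simp add: assoc_mult_mat[of _ n n _ n _ n])
qed

lemma tt_entry:
  assumes Q: "Q \<in> carrier_mat n n" and i: "i < n" and j: "j < n"
  shows "(transpose_mat Q * Q) $$ (i,j) = (\<Sum>k=0..<n. Q $$ (k,i) * Q $$ (k,j))"
  using Q i j by (simp add: scalar_prod_def)

lemma spectral:
  fixes A :: "real mat"
  assumes "A \<in> carrier_mat n n" and "transpose_mat A = A"
  shows "\<exists>Q l. orth n Q \<and> A = Q * mat_diag n l * transpose_mat Q"
  using assms
proof (induction n arbitrary: A)
  case 0
  have "orth 0 (1\<^sub>m 0)" unfolding orth_def by simp
  moreover have "A = 1\<^sub>m 0 * mat_diag 0 (\<lambda>_. 0) * transpose_mat (1\<^sub>m 0)"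
    using 0 by (intro eq_matI) auto
  ultimately show ?case by blast
next
  case (Suc m A)
  define n where "n = Suc m"
  have A: "A \<in> carrier_mat n n" and S: "transpose_mat A = A" using Suc n_def by auto
  obtain e where "eigenvalue A e" using sym_real_eigenvalue[OF A S] n_def by auto
  then obtain u where "eigenvector A u e" unfolding eigenvalue_def by blast
  then have u: "u \<in> carrier_vec n" and u0: "u \<noteq> 0\<^sub>v n" and Au: "A *\<^sub>v u = e \<cdot>\<^sub>v u"
    unfolding eigenvector_def using A by auto
  obtain W a where OW: "orth n W" and W0: "col W 0 = a \<cdot>\<^sub>v u" using orth_complete[OF u u0] by blast
  have W: "W \<in> carrier_mat n n" using OW orth_carrier by auto
  have WtW: "transpose_mat W * W = 1\<^sub>m n" using OW unfolding orth_def by auto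
  have WWt: "W * transpose_mat W = 1\<^sub>m n" using orth_right[OF OW] .
  have Aw0: "A *\<^sub>v col W 0 = e \<cdot>\<^sub>v col W 0"
    unfolding W0 using A u Au by (simp add: mult_mat_vec smult_smult_assoc mult.commute)
  define A1 where "A1 = transpose_mat W * A * W"
  have A1: "A1 \<in> carrier_mat n n" unfolding A1_def using A W by auto
  have S1: "transpose_mat A1 = A1" unfolding A1_def using tr3[OF _ A W, of "transpose_mat W"] W S by simp
  have S1e: "A1 $$ (i,j) = A1 $$ (j,i)" if "i < n" "j < n" for i j
    using arg_cong[OF S1, of "\<lambda>M. M $$ (i,j)"] that A1 by simp
  have col0: "A1 $$ (i,0) = (if i = 0 then e else 0)" if i: "i < n" for i
  proof -
    have n0: "0 < n" unfolding n_def by simp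
    have "A1 = transpose_mat W * (A * W)" unfolding A1_def using A W by simp
    then have "A1 $$ (i,0) = col W i \<bullet> (A *\<^sub>v col W 0)"
      using i n0 A W by (simp add: col_mult2 mult_mat_vec_def)
    also have "\<dots> = e * (col W i \<bullet> col W 0)" unfolding Aw0 using W i by simp
    also have "col W i \<bullet> col W 0 = (transpose_mat W * W) $$ (i,0)" using W i n0 by simp
    also have "\<dots> = (if i = 0 then 1 else 0)" unfolding WtW using i n0 by simp
    finally show ?thesis by simp
  qed
  define B where "B = mat m m (\<lambda>(i,j). A1 $$ (Suc i, Suc j))"
  have B: "B \<in> carrier_mat m m" unfolding B_def by simp
  have SB: "transpose_mat B = B" unfolding B_def
    by (intro eq_matI) (auto simp: S1e n_def)
  obtain Q' l' where OQ': "orth m Q'" and BQ: "B = Q' * mat_diag m l' * transpose_mat Q'"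
    using Suc.IH[OF B SB] by blast
  have Q': "Q' \<in> carrier_mat m m" using OQ' orth_carrier by auto
  define Q2 where "Q2 = mat n n (\<lambda>(i,j). if i = 0 \<and> j = 0 then 1 else if i = 0 \<or> j = 0 then 0 else Q' $$ (i-1, j-1))"
  define l where "l = (\<lambda>i. if i = 0 then e else l' (i - 1))"
  have Q2: "Q2 \<in> carrier_mat n n" unfolding Q2_def by simp
  have Q2e: "Q2 $$ (i,j) = (if i = 0 \<and> j = 0 then 1 else if i = 0 \<or> j = 0 then 0 else Q' $$ (i-1, j-1))"
    if "i < n" "j < n" for i j unfolding Q2_def using that by simp
  have OQ2: "orth n Q2" unfolding orth_def
  proof (intro conjI Q2 eq_matI)
    fix i j assume "i < dim_row (1\<^sub>m n)" "j < dim_col (1\<^sub>m n)"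
    then have ij: "i < n" "j < n" by auto
    have "(transpose_mat Q2 * Q2) $$ (i,j) = (\<Sum>k=0..<n. Q2 $$ (k,i) * Q2 $$ (k,j))"
      using tt_entry[OF Q2 ij] .
    also have "\<dots> = Q2 $$ (0,i) * Q2 $$ (0,j) + (\<Sum>k=0..<m. Q2 $$ (Suc k,i) * Q2 $$ (Suc k,j))"
      unfolding n_def by (rule sum_split0)
    also have "\<dots> = 1\<^sub>m n $$ (i,j)"
    proof (cases "i = 0 \<or> j = 0")
      case True
      then show ?thesis using ij by (auto simp: Q2e n_def)
    next
      case False
      then obtain i' j' where ii: "i = Suc i'" and jj: "j = Suc j'" by (cases i; cases j) auto
      have "(\<Sum>k=0..<m. Q2 $$ (Suc k,i) * Q2 $$ (Suc k,j)) = (\<Sum>k=0..<m. Q' $$ (k,i') * Q' $$ (k,j'))"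
        using ij ii jj by (intro sum.cong refl) (auto simp: Q2e n_def)
      also have "\<dots> = (transpose_mat Q' * Q') $$ (i',j')" using tt_entry[OF Q', of i' j'] ij ii jj n_def by simp
      also have "\<dots> = 1\<^sub>m m $$ (i',j')" using OQ' unfolding orth_def by simp
      finally show ?thesis using ij ii jj by (simp add: Q2e n_def)
    qed
    finally show "(transpose_mat Q2 * Q2) $$ (i,j) = 1\<^sub>m n $$ (i,j)" .
  qed (use Q2 in auto)
  have A1Q: "A1 = Q2 * mat_diag n l * transpose_mat Q2"
  proof (rule eq_matI)
    fix i j assume "i < dim_row (Q2 * mat_diag n l * transpose_mat Q2)" "j < dim_col (Q2 * mat_diag n l * transpose_mat Q2)"
    then have ij: "i < n" "j < n" using Q2 by auto
    have "(Q2 * mat_diag n l * transpose_mat Q2) $$ (i,j) = (\<Sum>k=0..<n. Q2 $$ (i,k) * l k * Q2 $$ (j,k))"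
      using sdiag_entry[OF Q2 ij] .
    also have "\<dots> = Q2 $$ (i,0) * l 0 * Q2 $$ (j,0) + (\<Sum>k=0..<m. Q2 $$ (i,Suc k) * l (Suc k) * Q2 $$ (j,Suc k))"
      unfolding n_def by (rule sum_split0)
    also have "\<dots> = A1 $$ (i,j)"
    proof (cases "i = 0 \<or> j = 0")
      case True
      then show ?thesis using ij col0 S1e[of 0 j] by (auto simp: Q2e n_def l_def)
    next
      case False
      then obtain i' j' where ii: "i = Suc i'" and jj: "j = Suc j'" by (cases i; cases j) auto
      have "(\<Sum>k=0..<m. Q2 $$ (i,Suc k) * l (Suc k) * Q2 $$ (j,Suc k)) = (\<Sum>k=0..<m. Q' $$ (i',k) * l' k * Q' $$ (j',k))"
        using ij ii jj by (intro sum.cong refl) (auto simp: Q2e n_def l_def)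
      also have "\<dots> = B $$ (i',j')" unfolding BQ using sdiag_entry[OF Q', of i' j'] ij ii jj n_def by simp
      also have "\<dots> = A1 $$ (i,j)" unfolding B_def using ij ii jj n_def by simp
      finally show ?thesis using ij ii jj by (simp add: Q2e n_def)
    qed
    finally show "A1 $$ (i,j) = (Q2 * mat_diag n l * transpose_mat Q2) $$ (i,j)" by simp
  qed (use A1 Q2 in auto)
  define Q where "Q = W * Q2"
  have Q: "Q \<in> carrier_mat n n" unfolding Q_def using W Q2 by auto
  have "transpose_mat Q * Q = transpose_mat Q2 * (transpose_mat W * W) * Q2"
    unfolding Q_def using W Q2 by (simp add: transpose_mult[of _ n n] assoc_mult_mat[of _ n n _ n _ n] mult_cn)
  also have "\<dots> = 1\<^sub>m n" unfolding WtW using OQ2 Q2 unfolding orth_def by simp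
  finally have OQ: "orth n Q" using Q unfolding orth_def by simp
  have "Q * mat_diag n l * transpose_mat Q = W * (Q2 * mat_diag n l * transpose_mat Q2) * transpose_mat W"
    unfolding Q_def using W Q2 by (simp add: transpose_mult[of _ n n] assoc_mult_mat[of _ n n _ n _ n] mult_cn)
  also have "\<dots> = (W * transpose_mat W) * A * (W * transpose_mat W)"
    unfolding A1Q[symmetric] A1_def using W A by (simp add: assoc_mult_mat[of _ n n _ n _ n] mult_cn)
  also have "\<dots> = A" unfolding WWt using A by simp
  finally show ?case using OQ n_def by metis
qed


lemma char_poly_sdiag:
  assumes O: "orth n Q"
  shows "char_poly (Q * mat_diag n l * transpose_mat Q) = (\<Prod>a\<leftarrow>map l [0..<n]. [:- a, 1:])"
proof -
  have Q: "Q \<in> carrier_mat n n" using O orth_carrier by auto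
  have "similar_mat (Q * mat_diag n l * transpose_mat Q) (mat_diag n l)"
    unfolding similar_mat_def similar_mat_wit_def Let_def
    using Q orth_right[OF O] O unfolding orth_def
    by (intro exI[of _ Q] exI[of _ "transpose_mat Q"]) auto
  then have "char_poly (Q * mat_diag n l * transpose_mat Q) = char_poly (mat_diag n l)"
    by (rule char_poly_similar)
  also have "\<dots> = (\<Prod>a\<leftarrow>diag_mat (mat_diag n l). [:- a, 1:])"
    by (rule char_poly_upper_triangular[of _ n]) (auto simp: upper_triangular_def mat_diag_def)
  also have "diag_mat (mat_diag n l) = map l [0..<n]"
    by (auto simp: diag_mat_def mat_diag_def intro: nth_equalityI)
  finally show ?thesis .
qed

lemma order_prod_linear:
  "Polynomial.order a (\<Prod>b\<leftarrow>xs. [:- b, 1:]) = count (mset xs) (a::real)"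
proof (induction xs)
  case Nil
  then show ?case by (simp add: order_0I)
next
  case (Cons b xs)
  have nz: "(\<Prod>b\<leftarrow>xs. [:- b, 1:]) \<noteq> (0 :: real poly)"
    by (auto simp: prod_list_zero_iff)
  have "[:- b, 1:] * (\<Prod>b\<leftarrow>xs. [:- b, 1:]) \<noteq> (0 :: real poly)" using nz by (metis mult_eq_0_iff pCons_eq_0_iff one_neq_zero)
  have eq: "(\<Prod>b\<leftarrow>b#xs. [:- b, 1:]) = [:- b, 1:] * (\<Prod>b\<leftarrow>xs. [:- b, 1:] :: real poly)"
    by (simp only: list.map prod_list.Cons)
  have "Polynomial.order a (\<Prod>b\<leftarrow>b#xs. [:- b, 1:]) = Polynomial.order a [:- b, 1:] + Polynomial.order a (\<Prod>b\<leftarrow>xs. [:- b, 1:])"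
    unfolding eq by (rule order_mult) fact
  also have "Polynomial.order a [:- b, 1:] = (if b = a then 1 else 0)"
    using order_linear'[of a "-b"] by simp
  finally show ?case using Cons.IH by simp
qed

lemma prod_linear_mset:
  assumes "(\<Prod>b\<leftarrow>xs. [:- b, 1:]) = (\<Prod>b\<leftarrow>ys. [:- b, 1:] :: real poly)"
  shows "mset xs = mset ys"
  by (rule multiset_eqI) (metis assms order_prod_linear)

lemma prod_linear_perm:
  assumes "mset xs = mset ys"
  shows "(\<Prod>b\<leftarrow>xs. [:- b, 1:]) = (\<Prod>b\<leftarrow>ys. [:- b, 1:] :: real poly)"
proof -
  have "(\<Prod>b\<leftarrow>xs. [:- b, 1:]) = prod_mset (image_mset (\<lambda>b. [:- b, 1:]) (mset xs))"
    by (metis mset_map prod_mset_prod_list)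
  also have "\<dots> = prod_mset (image_mset (\<lambda>b. [:- b, 1:]) (mset ys))" using assms by simp
  also have "\<dots> = (\<Prod>b\<leftarrow>ys. [:- b, 1:])" by (metis mset_map prod_mset_prod_list)
  finally show ?thesis .
qed

lemma eigvals_desc_sdiag:
  assumes O: "orth n Q"
  shows "eigvals_desc (Q * mat_diag n l * transpose_mat Q) = rev (sort (map l [0..<n]))"
proof -
  let ?xs = "rev (sort (map l [0..<n]))"
  have cp: "char_poly (Q * mat_diag n l * transpose_mat Q) = (\<Prod>a\<leftarrow>?xs. [:- a, 1:])"
    unfolding char_poly_sdiag[OF O] by (rule prod_linear_perm) simp
  have sx: "sorted_wrt (\<ge>) ?xs" by (simp add: sorted_wrt_rev)
  show ?thesis unfolding eigvals_desc_def
  proof (rule the_equality)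
    show "sorted_wrt (\<ge>) ?xs \<and> char_poly (Q * mat_diag n l * transpose_mat Q) = (\<Prod>a\<leftarrow>?xs. [:- a, 1:])"
      using sx cp by simp
  next
    fix ys assume ys: "sorted_wrt (\<ge>) ys \<and> char_poly (Q * mat_diag n l * transpose_mat Q) = (\<Prod>a\<leftarrow>ys. [:- a, 1:])"
    then have "mset ys = mset ?xs" using cp by (intro prod_linear_mset) simp
    then have m: "mset (rev ys) = mset (map l [0..<n])" by simp
    have "sorted (rev ys)" using ys by (simp add: sorted_wrt_rev)
    then have "sort (map l [0..<n]) = rev ys" using properties_for_sort[OF m] by simp
    then show "ys = ?xs" by simp
  qed
qed


definition phi :: "nat \<Rightarrow> real mat \<Rightarrow> real mat \<Rightarrow> real" where
  "phi k X W = (\<Sum>i=0..<k. (transpose_mat W * X * W) $$ (i,i))"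

lemma quad_entry:
  fixes R :: "real mat"
  assumes R: "R \<in> carrier_mat n n" and i: "i < n"
  shows "(transpose_mat R * mat_diag n g * R) $$ (i,i) = (\<Sum>j=0..<n. (R $$ (j,i))^2 * g j)"
proof -
  have RT: "transpose_mat R \<in> carrier_mat n n" using R by simp
  have "transpose_mat R * mat_diag n g = mat n n (\<lambda>(i,j). transpose_mat R $$ (i,j) * g j)"
    using mat_diag_mult_right[OF RT] .
  then show ?thesis using R i by (simp add: scalar_prod_def power2_eq_square ac_simps)
qed

lemma lp_ineq:
  fixes e c :: "nat \<Rightarrow> real"
  assumes mono: "\<And>i j. i \<le> j \<Longrightarrow> j < n \<Longrightarrow> e j \<le> e i"
    and c0: "\<And>i. i < n \<Longrightarrow> 0 \<le> c i" and c1: "\<And>i. i < n \<Longrightarrow> c i \<le> 1"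
    and cs: "(\<Sum>i=0..<n. c i) = real k" and kn: "k \<le> n"
  shows "(\<Sum>i=0..<n. e i * c i) \<le> (\<Sum>i=0..<k. e i)"
proof -
  define t where "t = e (k - 1)"
  have up: "e i \<le> t" if "k \<le> i" "i < n" for i
    unfolding t_def using mono[of "k-1" i] that by auto
  have lo: "t \<le> e i" if "i < k" for i
    unfolding t_def using mono[of i "k-1"] that kn by auto
  have split: "(\<Sum>i=0..<n. f i) = (\<Sum>i=0..<k. f i) + (\<Sum>i=k..<n. f i)" for f :: "nat \<Rightarrow> real"
    using kn by (simp add: sum.atLeastLessThan_concat)
  have "(\<Sum>i=k..<n. e i * c i) \<le> (\<Sum>i=k..<n. t * c i)"
    by (rule sum_mono) (use up c0 in \<open>auto intro: mult_right_mono\<close>)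
  moreover have "(\<Sum>i=0..<k. t * (1 - c i)) \<le> (\<Sum>i=0..<k. e i * (1 - c i))"
    by (rule sum_mono) (use lo c1 kn in \<open>auto intro: mult_right_mono\<close>)
  moreover have "t * (\<Sum>i=k..<n. c i) = t * (real k - (\<Sum>i=0..<k. c i))" using cs split[of c] by simp
  moreover have "(\<Sum>i=0..<k. t * (1 - c i)) = t * (real k - (\<Sum>i=0..<k. c i))"
    by (simp add: sum_distrib_left[symmetric] sum_subtractf)
  moreover have "(\<Sum>i=k..<n. t * c i) = t * (\<Sum>i=k..<n. c i)" by (simp add: sum_distrib_left)
  moreover have "(\<Sum>i=0..<k. e i * (1 - c i)) = (\<Sum>i=0..<k. e i) - (\<Sum>i=0..<k. e i * c i)"
    by (simp add: algebra_simps sum_subtractf)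
  ultimately show ?thesis using split[of "\<lambda>i. e i * c i"] by linarith
qed

lemma sym_mat_entry: "transpose_mat A = A \<Longrightarrow> i < dim_row A \<Longrightarrow> j < dim_col A \<Longrightarrow> A $$ (j,i) = A $$ (i,j)"
  by (metis index_transpose_mat(1))

lemma kyfan_le:
  assumes OQ: "orth n Q" and OW: "orth n W" and kn: "k \<le> n"
    and X: "X = Q * mat_diag n l * transpose_mat Q"
    and xs: "xs = rev (sort (map l [0..<n]))"
  shows "phi k X W \<le> (\<Sum>i=0..<k. xs ! i)"
proof -
  have Q: "Q \<in> carrier_mat n n" and W: "W \<in> carrier_mat n n" using OQ OW orth_carrier by auto
  define U where "U = transpose_mat Q * W"
  have U: "U \<in> carrier_mat n n" unfolding U_def using Q W by auto
  have "transpose_mat U * U = transpose_mat W * (Q * transpose_mat Q) * W"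
    unfolding U_def using Q W by (simp add: transpose_mult[of _ n n _ n] assoc_mult_mat[of _ n n _ n _ n] mult_cn)
  also have "\<dots> = 1\<^sub>m n" using orth_right[OF OQ] OW W unfolding orth_def by simp
  finally have OU: "orth n U" using U unfolding orth_def by simp
  have UUt: "U * transpose_mat U = 1\<^sub>m n" using orth_right[OF OU] .
  have WXW: "transpose_mat W * X * W = transpose_mat U * mat_diag n l * U"
    unfolding X U_def using Q W by (simp add: transpose_mult[of _ n n _ n] assoc_mult_mat[of _ n n _ n _ n] mult_cn)
  define c where "c = (\<lambda>j. \<Sum>i=0..<k. (U $$ (j,i))^2)"
  have "phi k X W = (\<Sum>i=0..<k. \<Sum>j=0..<n. (U $$ (j,i))^2 * l j)"
    unfolding phi_def WXW using quad_entry[OF U] kn by (intro sum.cong refl) auto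
  also have "\<dots> = (\<Sum>j=0..<n. l j * c j)"
    unfolding c_def by (subst sum.swap) (simp add: sum_distrib_left ac_simps)
  finally have phic: "phi k X W = (\<Sum>j=0..<n. l j * c j)" .
  have c0: "0 \<le> c j" for j unfolding c_def by (auto intro: sum_nonneg)
  have c1: "c j \<le> 1" if j: "j < n" for j
  proof -
    have "c j \<le> (\<Sum>i=0..<n. (U $$ (j,i))^2)" unfolding c_def using kn
      by (intro sum_mono2) auto
    also have "\<dots> = (U * transpose_mat U) $$ (j,j)" using U j by (simp add: scalar_prod_def power2_eq_square)
    also have "\<dots> = 1" using UUt j by simp
    finally show ?thesis .
  qed
  have cs: "(\<Sum>j=0..<n. c j) = real k"
  proof -
    have "(\<Sum>j=0..<n. c j) = (\<Sum>i=0..<k. \<Sum>j=0..<n. (U $$ (j,i))^2)"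
      unfolding c_def by (rule sum.swap)
    also have "\<dots> = (\<Sum>i=0..<k. (transpose_mat U * U) $$ (i,i))"
      using U kn by (intro sum.cong refl) (subst tt_entry[OF U], auto simp: power2_eq_square)
    also have "\<dots> = (\<Sum>i=0..<k. 1)" using OU kn unfolding orth_def by (intro sum.cong refl) auto
    finally show ?thesis by simp
  qed
  have m: "mset xs = mset (map l [0..<n])" unfolding xs by simp
  obtain p where p: "p permutes {..<length (map l [0..<n])}" and pl: "permute_list p (map l [0..<n]) = xs"
    using mset_eq_permutation[OF m] by blast
  have p': "p permutes {0..<n}" using p by (simp add: lessThan_atLeast0)
  have xsp: "xs ! i = l (p i)" if "i < n" for i
  proof -
    have "p i < n" using p' that permutes_in_image by fastforce
    then show ?thesis using pl[symmetric] that p by (simp add: permute_list_nth)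
  qed
  have lenxs: "length xs = n" unfolding xs by simp
  have "(\<Sum>j=0..<n. l j * c j) = (\<Sum>i=0..<n. l (p i) * c (p i))"
    using sum.permute[OF p', of "\<lambda>j. l j * c j"] by (simp add: comp_def)
  also have "\<dots> = (\<Sum>i=0..<n. xs ! i * c (p i))" by (intro sum.cong refl) (simp add: xsp)
  also have "\<dots> \<le> (\<Sum>i=0..<k. xs ! i)"
  proof (rule lp_ineq[OF _ _ _ _ kn])
    show "xs ! j \<le> xs ! i" if "i \<le> j" "j < n" for i j
      using sorted_rev_nth_mono[of xs i j] that lenxs unfolding xs by simp
    show "0 \<le> c (p i)" for i by (rule c0)
    show "c (p i) \<le> 1" if "i < n" for i using c1 p' that permutes_in_image by fastforce
    show "(\<Sum>i=0..<n. c (p i)) = real k"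
      using sum.permute[OF p', of c] cs by (simp add: comp_def)
  qed
  finally show ?thesis using phic by simp
qed


lemma kyfan_attain:
  assumes OQ: "orth n Q" and kn: "k \<le> n"
    and X: "X = Q * mat_diag n l * transpose_mat Q"
    and xs: "xs = rev (sort (map l [0..<n]))"
  shows "\<exists>W. orth n W \<and> phi k X W = (\<Sum>i=0..<k. xs ! i)"
proof -
  have Q: "Q \<in> carrier_mat n n" using OQ orth_carrier by auto
  have m: "mset xs = mset (map l [0..<n])" unfolding xs by simp
  obtain p where p: "p permutes {..<length (map l [0..<n])}" and pl: "permute_list p (map l [0..<n]) = xs"
    using mset_eq_permutation[OF m] by blast
  have p': "p permutes {0..<n}" using p by (simp add: lessThan_atLeast0)
  have pn: "p i < n" if "i < n" for i using p' that permutes_in_image by fastforce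
  have xsp: "xs ! i = l (p i)" if "i < n" for i
    using pl[symmetric] that p pn[OF that] by (simp add: permute_list_nth)
  have pinj: "p i = p j \<longleftrightarrow> i = j" for i j using p' by (meson permutes_inj injD)
  define P where "P = mat n n (\<lambda>(a,b). if a = p b then 1 else (0::real))"
  have P: "P \<in> carrier_mat n n" unfolding P_def by simp
  have OP: "orth n P" unfolding orth_def
  proof (intro conjI P eq_matI)
    fix i j assume "i < dim_row (1\<^sub>m n)" "j < dim_col (1\<^sub>m n)"
    then have ij: "i < n" "j < n" by auto
    have "(transpose_mat P * P) $$ (i,j) = (\<Sum>a=0..<n. P $$ (a,i) * P $$ (a,j))" using tt_entry[OF P ij] .
    also have "\<dots> = (\<Sum>a=0..<n. if a = p i then (if p i = p j then 1 else 0) else 0)"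
      using ij unfolding P_def by (intro sum.cong refl) auto
    also have "\<dots> = (if p i = p j then 1 else 0)" using pn[OF ij(1)] by simp
    also have "\<dots> = 1\<^sub>m n $$ (i,j)" using ij pinj by simp
    finally show "(transpose_mat P * P) $$ (i,j) = 1\<^sub>m n $$ (i,j)" .
  qed (use P in auto)
  define W where "W = Q * P"
  have W: "W \<in> carrier_mat n n" unfolding W_def using Q P by auto
  have QtQ: "transpose_mat Q * Q = 1\<^sub>m n" using OQ unfolding orth_def by simp
  have "transpose_mat W * W = transpose_mat P * (transpose_mat Q * Q) * P"
    unfolding W_def using Q P by (simp add: transpose_mult[of _ n n _ n] assoc_mult_mat[of _ n n _ n _ n] mult_cn)
  also have "\<dots> = 1\<^sub>m n" using QtQ OP P unfolding orth_def by simp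
  finally have OW: "orth n W" using W unfolding orth_def by simp
  have "transpose_mat W * X * W = transpose_mat P * (transpose_mat Q * Q) * mat_diag n l * (transpose_mat Q * Q) * P"
    unfolding W_def X using Q P by (simp add: transpose_mult[of _ n n _ n] assoc_mult_mat[of _ n n _ n _ n] mult_cn)
  also have "\<dots> = transpose_mat P * mat_diag n l * P" unfolding QtQ using P by simp
  finally have WXW: "transpose_mat W * X * W = transpose_mat P * mat_diag n l * P" .
  have "phi k X W = (\<Sum>i=0..<k. \<Sum>j=0..<n. (P $$ (j,i))^2 * l j)"
    unfolding phi_def WXW using quad_entry[OF P] kn by (intro sum.cong refl) auto
  also have "\<dots> = (\<Sum>i=0..<k. xs ! i)"
  proof (intro sum.cong refl)
    fix i assume "i \<in> {0..<k}"
    then have i: "i < n" using kn by auto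
    have "(\<Sum>j=0..<n. (P $$ (j,i))^2 * l j) = (\<Sum>j=0..<n. if j = p i then l j else 0)"
      using i unfolding P_def by (intro sum.cong refl) auto
    also have "\<dots> = l (p i)" using pn[OF i] by simp
    finally show "(\<Sum>j=0..<n. (P $$ (j,i))^2 * l j) = xs ! i" using xsp[OF i] by simp
  qed
  finally show ?thesis using OW by blast
qed

definition KF :: "nat \<Rightarrow> real mat \<Rightarrow> real" where
  "KF k X = (\<Sum>j=1..k. eig_dec X j)"

lemma sum_shift1: "(\<Sum>j=1..(k::nat). g (j - 1)) = (\<Sum>i=0..<k. (g :: nat \<Rightarrow> real) i)"
  by (induct k) auto

lemma KF_props:
  assumes X: "X \<in> carrier_mat n n" and S: "transpose_mat X = X" and kn: "k \<le> n"
  shows "(\<forall>W. orth n W \<longrightarrow> phi k X W \<le> KF k X) \<and> (\<exists>W. orth n W \<and> phi k X W = KF k X)"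
proof -
  obtain Q l where OQ: "orth n Q" and XQ: "X = Q * mat_diag n l * transpose_mat Q"
    using spectral[OF X S] by blast
  define xs where "xs = rev (sort (map l [0..<n]))"
  have ev: "eigvals_desc X = xs" unfolding XQ xs_def by (rule eigvals_desc_sdiag[OF OQ])
  have "KF k X = (\<Sum>i=0..<k. xs ! i)"
    unfolding KF_def eig_dec_def ev using sum_shift1[of "\<lambda>i. xs ! i" k] by simp
  then show ?thesis using kyfan_le[OF OQ _ kn XQ xs_def] kyfan_attain[OF OQ kn XQ xs_def] by auto
qed


lemma powr_expo_convex:
  fixes a :: real
  assumes s: "0 \<le> s" "s \<le> 1"
  shows "a powr ((1-s)*x + s*y) \<le> (1-s) * a powr x + s * a powr y"
proof (cases "a = 0")
  case True then show ?thesis by simp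
next
  case False
  have "exp ((1-s) *\<^sub>R (x * ln a) + s *\<^sub>R (y * ln a)) \<le> (1-s) * exp (x * ln a) + s * exp (y * ln a)"
    by (rule convex_onD[OF exp_convex]) (use s in auto)
  moreover have "(1-s) *\<^sub>R (x * ln a) + s *\<^sub>R (y * ln a) = ((1-s)*x + s*y) * ln a"
    by (simp add: algebra_simps)
  ultimately show ?thesis using False by (simp add: powr_def)
qed

lemma spow_le: fixes s p :: real assumes "0 \<le> s" "s \<le> 1" "p \<ge> 1" shows "s powr p \<le> s"
proof (cases "s = 0")
  case True then show ?thesis using assms by simp
next
  case False
  then have "s powr p \<le> s powr 1" using assms by (intro powr_mono') auto
  then show ?thesis using False assms by simp
qed

lemma pow_conv:
  fixes a b s p :: real
  assumes p: "p \<ge> 1" and a: "0 \<le> a" and b: "0 \<le> b" and s: "0 \<le> s" "s \<le> 1"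
  shows "((1-s)*a + s*b) powr p \<le> (1-s) * a powr p + s * b powr p"
proof (cases "a = 0 \<or> b = 0")
  case False
  then have "a \<in> {0<..}" "b \<in> {0<..}" using a b by auto
  from convex_onD[OF powr_convex[OF p] s this] show ?thesis by simp
next
  case True
  then show ?thesis
  proof
    assume a0: "a = 0"
    have "(s*b) powr p = s powr p * b powr p" using s b by (simp add: powr_mult)
    also have "\<dots> \<le> s * b powr p" using spow_le[OF s p] by (intro mult_right_mono) auto
    finally show ?thesis using a0 p by simp
  next
    assume b0: "b = 0"
    have "((1-s)*a) powr p = (1-s) powr p * a powr p" using s a by (simp add: powr_mult)
    also have "\<dots> \<le> (1-s) * a powr p" using spow_le[of "1-s" p] s p by (intro mult_right_mono) auto
    finally show ?thesis using b0 p by simp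
  qed
qed


theorem mainTheorem2:
  fixes d k :: nat and p :: real
  assumes "1 \<le> k" and "k \<le> d" and "p \<ge> 1"
  shows "geod_convex d (\<lambda>X. \<bar>\<Sum>j=1..k. eig_dec X j\<bar> powr p)"
  unfolding geod_convex_def
proof (intro allI impI)
  fix A B assume pA: "pd_mat d A" and pB: "pd_mat d B"
  have A: "A \<in> carrier_mat d d" and SA: "transpose_mat A = A" using pA unfolding pd_mat_def by auto
  have B: "B \<in> carrier_mat d d" and SB: "transpose_mat B = B" using pB unfolding pd_mat_def by auto
  have kd: "k \<le> d" by fact
  obtain Qa la where OQa: "orth d Qa" and AQ: "A = Qa * mat_diag d la * transpose_mat Qa"
    using spectral[OF A SA] by blast
  have Qa: "Qa \<in> carrier_mat d d" using OQa orth_carrier by auto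
  define h where "h = mat_powr A (1/2)"
  define g where "g = mat_powr A (-1/2)"
  have h_eq: "h = Qa * mat_diag d (\<lambda>i. la i powr (1/2)) * transpose_mat Qa"
    unfolding h_def by (rule mat_powr_eq[OF OQa AQ])
  have g_eq: "g = Qa * mat_diag d (\<lambda>i. la i powr (-1/2)) * transpose_mat Qa"
    unfolding g_def by (rule mat_powr_eq[OF OQa AQ])
  have h: "h \<in> carrier_mat d d" and Sh: "transpose_mat h = h"
    unfolding h_eq using Qa sdiag_sym[OF Qa] by auto
  have g: "g \<in> carrier_mat d d" and Sg: "transpose_mat g = g"
    unfolding g_eq using Qa sdiag_sym[OF Qa] by auto
  define C where "C = g * B * g"
  have C: "C \<in> carrier_mat d d" unfolding C_def using g B by auto
  have SC: "transpose_mat C = C" unfolding C_def using tr3[OF g B g] Sg SB by simp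
  obtain Q l where OQ: "orth d Q" and CQ: "C = Q * mat_diag d l * transpose_mat Q"
    using spectral[OF C SC] by blast
  have Q: "Q \<in> carrier_mat d d" using OQ orth_carrier by auto
  define M where "M = (\<lambda>t. Q * mat_diag d (\<lambda>i. l i powr t) * transpose_mat Q)"
  define G where "G = (\<lambda>t. h * M t * h)"
  have geodG: "geod A B t = G t" for t
    unfolding geod_def G_def M_def h_def[symmetric] g_def[symmetric] C_def[symmetric]
    by (simp add: mat_powr_eq[OF OQ CQ])
  have M: "M t \<in> carrier_mat d d" for t unfolding M_def using Q by auto
  have SM: "transpose_mat (M t) = M t" for t unfolding M_def by (rule sdiag_sym[OF Q])
  have G: "G t \<in> carrier_mat d d" for t unfolding G_def using h M by auto
  have SG: "transpose_mat (G t) = G t" for t unfolding G_def using tr3[OF h M h] Sh SM by simp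
  define R where "R = (\<lambda>W. transpose_mat Q * h * W)"
  define psi where "psi = (\<lambda>W t. \<Sum>i=0..<k. \<Sum>j=0..<d. (R W $$ (j,i))^2 * l j powr t)"
  have phiG: "phi k (G t) W = psi W t" if W: "W \<in> carrier_mat d d" for W t
  proof -
    have R: "R W \<in> carrier_mat d d" unfolding R_def using Q h W by auto
    have RT: "transpose_mat (R W) = transpose_mat W * h * Q" unfolding R_def
      using tr3[OF _ h W, of "transpose_mat Q"] Q Sh by simp
    have "transpose_mat W * G t * W = transpose_mat (R W) * mat_diag d (\<lambda>i. l i powr t) * R W"
      unfolding RT unfolding R_def G_def M_def using W h Q
      by (simp add: assoc_mult_mat[of _ d d _ d _ d] mult_cn)
    then show ?thesis unfolding phi_def psi_def using quad_entry[OF R] kd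
      by (intro sum.cong refl) auto
  qed
  have O1: "orth d (1\<^sub>m d)" unfolding orth_def by simp
  have KFnn: "0 \<le> KF k (G t)" for t
  proof -
    have "phi k (G t) (1\<^sub>m d) \<le> KF k (G t)" using KF_props[OF G SG kd] O1 by blast
    moreover have "0 \<le> phi k (G t) (1\<^sub>m d)" unfolding phiG[OF one_carrier_mat] psi_def
      by (intro sum_nonneg mult_nonneg_nonneg) auto
    ultimately show ?thesis by linarith
  qed
  have KFconv: "KF k (G ((1-s)*x + s*y)) \<le> (1-s) * KF k (G x) + s * KF k (G y)"
    if s: "0 \<le> s" "s \<le> 1" for s x y
  proof -
    obtain W where OW: "orth d W" and eqW: "phi k (G ((1-s)*x + s*y)) W = KF k (G ((1-s)*x + s*y))"
      using KF_props[OF G SG kd] by blast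
    have W: "W \<in> carrier_mat d d" using OW orth_carrier by auto
    have "KF k (G ((1-s)*x + s*y)) = psi W ((1-s)*x + s*y)" using eqW phiG[OF W] by simp
    also have "\<dots> \<le> (\<Sum>i=0..<k. \<Sum>j=0..<d. (R W $$ (j,i))^2 * ((1-s) * l j powr x + s * l j powr y))"
      unfolding psi_def
      by (intro sum_mono mult_left_mono powr_expo_convex s) auto
    also have "\<dots> = (\<Sum>i=0..<k. \<Sum>j=0..<d. (1-s) * ((R W $$ (j,i))^2 * l j powr x) + s * ((R W $$ (j,i))^2 * l j powr y))"
      by (intro sum.cong refl) (simp add: algebra_simps)
    also have "\<dots> = (1-s) * psi W x + s * psi W y"
      unfolding psi_def by (simp only: sum.distrib sum_distrib_left)
    also have "\<dots> = (1-s) * phi k (G x) W + s * phi k (G y) W" using phiG[OF W] by simp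
    also have "\<dots> \<le> (1-s) * KF k (G x) + s * KF k (G y)"
      using KF_props[OF G SG kd] OW s by (intro add_mono mult_left_mono) auto
    finally show ?thesis .
  qed
  have KFeq: "(\<Sum>j=1..k. eig_dec X j) = KF k X" for X unfolding KF_def ..
  show "convex_on {0..1} (\<lambda>t. \<bar>\<Sum>j=1..k. eig_dec (geod A B t) j\<bar> powr p)"
  proof (rule convex_onI)
    fix s x y :: real assume s: "0 < s" "s < 1" and x: "x \<in> {0..1}" and y: "y \<in> {0..1}"
    have "\<bar>KF k (G ((1-s)*x + s*y))\<bar> powr p = KF k (G ((1-s)*x + s*y)) powr p"
      using KFnn by simp
    also have "\<dots> \<le> ((1-s) * KF k (G x) + s * KF k (G y)) powr p"
      using KFconv[of s x y] s KFnn \<open>p \<ge> 1\<close> by (intro powr_mono2) auto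
    also have "\<dots> \<le> (1-s) * KF k (G x) powr p + s * KF k (G y) powr p"
      using pow_conv[of p "KF k (G x)" "KF k (G y)" s] KFnn s \<open>p \<ge> 1\<close> by auto
    finally show "\<bar>\<Sum>j=1..k. eig_dec (geod A B ((1-s) *\<^sub>R x + s *\<^sub>R y)) j\<bar> powr p
      \<le> (1-s) * \<bar>\<Sum>j=1..k. eig_dec (geod A B x) j\<bar> powr p + s * \<bar>\<Sum>j=1..k. eig_dec (geod A B y) j\<bar> powr p"
      unfolding geodG KFeq using KFnn by simp
  qed (simp add: convex_real_interval)
qed

end
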